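(* At any time during the execution of DASH (described in the context) on an initially connected graph with $n$ nodes, every surviving node $v$ satisfies $\mathrm{rem}(v)\le n$.
   Context: Model: a network is an undirected graph, initially a connected graph $G_0$ on $n$ nodes. In each round an adversary deletes one surviving node $v$ with its incident edges, and then DASH adds edges. $G$ is the current network; $E'$ is the set of healing edges added so far whose endpoints both survive; $G'=(V(G),E')$. $N(u,G)$, $N(u,G')$ are neighbor sets in $G$, $G'$; $\delta(u)=\deg_G(u)-\deg_{G_0}(u)$. DASH: initially every node receives an ID drawn independently and uniformly from $[0,1]$ (its initial ID). When $v$ is deleted (quantities evaluated just before the deletion): partition the nodes of $N(v,G)$ whose current ID differs from that of $v$ into classes of equal current ID; $UN(v,G)$ consists of one node per class, the one with lowest initial ID. Let $S=UN(v,G)\cup N(v,G')$. Order $S$ by increasing $\delta$ and place it in this order into a complete binary tree with $|S|$ positions, filled level by level from the top and left to right; add to the network and to $E'$ the edge between each node of $S$ and the node at its parent position. Then all nodes of the component of $G'$ containing $S$ set their ID to the minimum current ID in $S$. Weights: every node $u$ has weight $w(u)$, initially $1$; when a node $v$ is deleted, $w(v)$ is added to the weight of an arbitrarily chosen node of $N(v,G')$. For a subgraph $H$, $W(H)$ is the sum of the weights of its vertices. For distinct surviving nodes $x,y$, $T(x,y)$ is the connected component of $G'-y$ containing $x$. Define $\mathrm{rem}(v)=\sum_{u\in N(v,G')}W(T(u,v))-\max_{u\in N(v,G')}W(T(u,v))+w(v)$ (the maximum over the empty set being $0$). *)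

theory Defs
  imports Complex_Main
begin

definition nbrs :: "'a set set \<Rightarrow> 'a \<Rightarrow> 'a set" where
  "nbrs E u = {x. x \<noteq> u \<and> {u, x} \<in> E}"

definition deg :: "'a set set \<Rightarrow> 'a \<Rightarrow> nat" where
  "deg E u = card (nbrs E u)"

definition adj :: "'a set \<Rightarrow> 'a set set \<Rightarrow> ('a \<times> 'a) set" where
  "adj V E = {(a, b). a \<in> V \<and> b \<in> V \<and> a \<noteq> b \<and> {a, b} \<in> E}"

definition comp :: "'a set \<Rightarrow> 'a set set \<Rightarrow> 'a \<Rightarrow> 'a set" where
  "comp V E x = {y \<in> V. (x, y) \<in> (adj V E)\<^sup>*}"

definition graph :: "'a set \<Rightarrow> 'a set set \<Rightarrow> bool" where
  "graph V E \<longleftrightarrow> (\<forall>e \<in> E. e \<subseteq> V \<and> card e = 2)"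

definition connected_graph :: "'a set \<Rightarrow> 'a set set \<Rightarrow> bool" where
  "connected_graph V E \<longleftrightarrow> graph V E \<and> (\<forall>x \<in> V. \<forall>y \<in> V. (x, y) \<in> (adj V E)\<^sup>*)"

text \<open>Edges of the complete binary tree filled level by level with the list xs
  (0-indexed: position i > 0 has parent position (i - 1) div 2).\<close>
definition tree_edges :: "'a list \<Rightarrow> 'a set set" where
  "tree_edges xs = {{xs ! i, xs ! ((i - 1) div 2)} | i. 0 < i \<and> i < length xs}"

record 'a dstate =
  alive :: "'a set"
  edges :: "'a set set"
  hedges :: "'a set set"     \<comment> \<open>E': healing edges with both endpoints surviving\<close>
  ident :: "'a \<Rightarrow> real"
  wt :: "'a \<Rightarrow> nat"

definition dash_init :: "'a set \<Rightarrow> 'a set set \<Rightarrow> ('a \<Rightarrow> real) \<Rightarrow> 'a dstate" where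
  "dash_init V0 E0 id0 = \<lparr>alive = V0, edges = E0, hedges = {}, ident = id0, wt = (\<lambda>_. 1)\<rparr>"

text \<open>UN(v,G): one node per class of equal current ID among the neighbours of v whose
  current ID differs from that of v, namely one with lowest initial ID.\<close>
definition is_UN :: "('a \<Rightarrow> real) \<Rightarrow> 'a dstate \<Rightarrow> 'a \<Rightarrow> 'a set \<Rightarrow> bool" where
  "is_UN id0 s v U \<longleftrightarrow>
     (let C = {x \<in> nbrs (edges s) v. ident s x \<noteq> ident s v} in
       U \<subseteq> C \<and>
       (\<forall>c \<in> C. \<exists>!u. u \<in> U \<and> ident s u = ident s c) \<and>
       (\<forall>u \<in> U. \<forall>c \<in> C. ident s c = ident s u \<longrightarrow> id0 u \<le> id0 c))"

text \<open>All choices left open by the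
  description (the deleted node, ties in UN, ties in the ordering by delta, the receiver
  of the weight) are existentially quantified.\<close>
definition dash_step :: "'a set set \<Rightarrow> ('a \<Rightarrow> real) \<Rightarrow> 'a dstate \<Rightarrow> 'a dstate \<Rightarrow> bool" where
  "dash_step E0 id0 s s2 \<longleftrightarrow>
    (\<exists>v U xs.
       v \<in> alive s \<and>
       is_UN id0 s v U \<and>
       distinct xs \<and> set xs = U \<union> nbrs (hedges s) v \<and>
       sorted_wrt (\<lambda>a b. int (deg (edges s) a) - int (deg E0 a)
                         \<le> int (deg (edges s) b) - int (deg E0 b)) xs \<and>
       alive s2 = alive s - {v} \<and>
       edges s2 = {e \<in> edges s. v \<notin> e} \<union> tree_edges xs \<and>
       hedges s2 = {e \<in> hedges s. v \<notin> e} \<union> tree_edges xs \<and>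
       ident s2 = (\<lambda>x. if xs \<noteq> [] \<and> x \<in> comp (alive s2) (hedges s2) (hd xs)
                        then Min (ident s ` set xs) else ident s x) \<and>
       ((nbrs (hedges s) v = {} \<and> wt s2 = wt s) \<or>
        (\<exists>r \<in> nbrs (hedges s) v. wt s2 = (wt s)(r := wt s r + wt s v))))"

definition dash_reachable :: "'a set \<Rightarrow> 'a set set \<Rightarrow> ('a \<Rightarrow> real) \<Rightarrow> 'a dstate \<Rightarrow> bool" where
  "dash_reachable V0 E0 id0 s \<longleftrightarrow> (dash_step E0 id0)\<^sup>*\<^sup>* (dash_init V0 E0 id0) s"

text \<open>W(T(u,v)) where T(u,v) is the component of G' - v containing u.\<close>
definition WT :: "'a dstate \<Rightarrow> 'a \<Rightarrow> 'a \<Rightarrow> nat" where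
  "WT s u v = sum (wt s) (comp (alive s - {v}) (hedges s) u)"

definition rem :: "'a dstate \<Rightarrow> 'a \<Rightarrow> nat" where
  "rem s v = (\<Sum>u \<in> nbrs (hedges s) v. WT s u v)
             - Max (insert 0 ((\<lambda>u. WT s u v) ` nbrs (hedges s) v)) + wt s v"

end

theory Submission
  imports Defs
begin

definition forest :: "'a set \<Rightarrow> 'a set set \<Rightarrow> bool" where
  "forest A H \<longleftrightarrow> (\<forall>a b. {a,b} \<in> H \<longrightarrow> a \<noteq> b \<longrightarrow> (a,b) \<notin> (adj A (H - {{a,b}}))\<^sup>*)"

lemma adj_sym: "(a,b) \<in> adj A H \<Longrightarrow> (b,a) \<in> adj A H"
  by (auto simp: adj_def insert_commute)

lemma conn_sym: "(a,b) \<in> (adj A H)\<^sup>* \<Longrightarrow> (b,a) \<in> (adj A H)\<^sup>*"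
proof (induction rule: rtrancl_induct)
  case base then show ?case by simp
next
  case (step y z)
  then show ?case by (meson adj_sym converse_rtrancl_into_rtrancl)
qed

lemma conn_mono: "A \<subseteq> A' \<Longrightarrow> H \<subseteq> H' \<Longrightarrow> (adj A H)\<^sup>* \<subseteq> (adj A' H')\<^sup>*"
  by (rule rtrancl_mono) (auto simp: adj_def)

lemma conn_in: "(x,y) \<in> (adj A H)\<^sup>* \<Longrightarrow> x \<noteq> y \<Longrightarrow> x \<in> A \<and> y \<in> A"
proof -
  assume c: "(x,y) \<in> (adj A H)\<^sup>*" and ne: "x \<noteq> y"
  have "x \<in> A" using c ne by (cases rule: converse_rtranclE) (auto simp: adj_def)
  moreover have "y \<in> A" using c ne by (cases rule: rtranclE) (auto simp: adj_def)
  ultimately show ?thesis by simp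
qed

lemma adj_insert: "x \<in> A \<Longrightarrow> y \<in> A \<Longrightarrow> x \<noteq> y \<Longrightarrow>
   adj A (insert {x,y} F) = adj A F \<union> {(x,y),(y,x)}"
  by (auto simp: adj_def doubleton_eq_iff)

lemma rtrancl_union2: "(p,q) \<in> (R \<union> {(x,y),(y,x)})\<^sup>* \<Longrightarrow>
  (p,q) \<in> R\<^sup>* \<or> ((p,x) \<in> R\<^sup>* \<and> (y,q) \<in> R\<^sup>*) \<or> ((p,y) \<in> R\<^sup>* \<and> (x,q) \<in> R\<^sup>*)"
proof (induction rule: rtrancl_induct)
  case base then show ?case by simp
next
  case (step m q)
  from step.hyps(2) consider "(m,q)\<in>R" | "m=x" "q=y" | "m=y" "q=x" by blast
  then show ?case using step.IH
  proof cases
    case 1 then show ?thesis using step.IH by (meson rtrancl.rtrancl_into_rtrancl)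
  next
    case 2 then show ?thesis using step.IH by auto
  next
    case 3 then show ?thesis using step.IH by auto
  qed
qed

lemma forest_mono: "forest A H \<Longrightarrow> A' \<subseteq> A \<Longrightarrow> H' \<subseteq> H \<Longrightarrow> forest A' H'"
  unfolding forest_def
proof (intro allI impI notI)
  fix a b assume f: "\<forall>a b. {a, b} \<in> H \<longrightarrow> a \<noteq> b \<longrightarrow> (a, b) \<notin> (adj A (H - {{a, b}}))\<^sup>*"
    and s: "A' \<subseteq> A" "H' \<subseteq> H" and ab: "{a,b} \<in> H'" "a \<noteq> b"
    and c: "(a, b) \<in> (adj A' (H' - {{a, b}}))\<^sup>*"
  have "(adj A' (H' - {{a, b}}))\<^sup>* \<subseteq> (adj A (H - {{a, b}}))\<^sup>*"
    by (rule conn_mono) (use s in auto)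
  then show False using f ab c s by blast
qed

lemma forest_insert:
  assumes fo: "forest A F" and Fg: "\<forall>e\<in>F. e \<subseteq> A" and xA: "x \<in> A" and yA: "y \<in> A"
    and ne: "x \<noteq> y" and nc: "(x,y) \<notin> (adj A F)\<^sup>*"
  shows "forest A (insert {x,y} F)"
  unfolding forest_def
proof (intro allI impI notI)
  fix a b assume ab: "{a,b} \<in> insert {x,y} F" "a \<noteq> b"
    and p: "(a,b) \<in> (adj A (insert {x,y} F - {{a,b}}))\<^sup>*"
  show False
  proof (cases "{a,b} = {x,y}")
    case True
    then have "insert {x,y} F - {{a,b}} \<subseteq> F" by auto
    then have "(adj A (insert {x,y} F - {{a,b}}))\<^sup>* \<subseteq> (adj A F)\<^sup>*"
      by (intro conn_mono) auto
    then have ab1: "(a,b) \<in> (adj A F)\<^sup>*" using p by (rule subsetD)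
    have "(a,b)=(x,y) \<or> (a,b)=(y,x)" using True ab(2) by (auto simp: doubleton_eq_iff)
    then show False
    proof
      assume "(a,b) = (x,y)" then show False using ab1 nc by simp
    next
      assume "(a,b) = (y,x)" then show False using conn_sym[OF ab1] nc by simp
    qed
  next
    case False
    then have abF: "{a,b} \<in> F" using ab by auto
    have eq: "insert {x,y} F - {{a,b}} = insert {x,y} (F - {{a,b}})" using False by auto
    let ?R = "adj A (F - {{a,b}})"
    have u2: "(a,b) \<in> (?R \<union> {(x,y),(y,x)})\<^sup>*" using p eq adj_insert[OF xA yA ne] by simp
    consider "(a,b) \<in> ?R\<^sup>*" | "(a,x) \<in> ?R\<^sup>*" "(y,b)\<in>?R\<^sup>*" | "(a,y)\<in>?R\<^sup>*" "(x,b)\<in>?R\<^sup>*"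
      using rtrancl_union2[OF u2] by blast
    note cs = this
    have sub: "?R\<^sup>* \<subseteq> (adj A F)\<^sup>*" by (rule conn_mono) auto
    have abA: "a\<in>A" "b\<in>A" using Fg abF by auto
    have abE: "(a,b) \<in> adj A F" using abA abF ab(2) by (auto simp: adj_def)
    then have abE': "(b,a) \<in> adj A F" by (rule adj_sym)
    show False
    proof (cases rule: cs)
      case 1 then show ?thesis using fo abF ab(2) unfolding forest_def by blast
    next
      case 2
      have "(x,a) \<in> (adj A F)\<^sup>*" using conn_sym[OF subsetD[OF sub 2(1)]] .
      then have "(x,b) \<in> (adj A F)\<^sup>*" using abE by (rule rtrancl_into_rtrancl)
      moreover have "(b,y) \<in> (adj A F)\<^sup>*" using conn_sym[OF subsetD[OF sub 2(2)]] .
      ultimately show False using nc rtrancl_trans by fast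
    next
      case 3
      have "(x,b) \<in> (adj A F)\<^sup>*" using subsetD[OF sub 3(2)] .
      then have "(x,a) \<in> (adj A F)\<^sup>*" using abE' by (rule rtrancl_into_rtrancl)
      moreover have "(a,y) \<in> (adj A F)\<^sup>*" using subsetD[OF sub 3(1)] .
      ultimately show False using nc rtrancl_trans by fast
    qed
  qed
qed

lemma forest_nbrs:
  assumes fo: "forest A H" and Hg: "\<forall>e\<in>H. e \<subseteq> A" and w: "w1 \<in> nbrs H v" "w2 \<in> nbrs H v" "w1 \<noteq> w2"
  shows "(w1,w2) \<notin> (adj (A - {v}) H)\<^sup>*"
proof
  assume c: "(w1,w2) \<in> (adj (A - {v}) H)\<^sup>*"
  have e1: "{v,w1} \<in> H" "v \<noteq> w1" and e2: "{v,w2} \<in> H" "v \<noteq> w2" using w by (auto simp: nbrs_def)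
  have "adj (A - {v}) H \<subseteq> adj A (H - {{v,w1}})" by (auto simp: adj_def)
  then have "(w1,w2) \<in> (adj A (H - {{v,w1}}))\<^sup>*" using c rtrancl_mono by blast
  moreover have "(w2,v) \<in> adj A (H - {{v,w1}})"
    using e2 Hg w(3) by (auto simp: adj_def doubleton_eq_iff insert_commute)
  ultimately have "(w1,v) \<in> (adj A (H - {{v,w1}}))\<^sup>*" by (rule rtrancl_into_rtrancl)
  then have "(v,w1) \<in> (adj A (H - {{v,w1}}))\<^sup>*" by (rule conn_sym)
  then show False using fo e1 unfolding forest_def by blast
qed

definition tpart :: "'a list \<Rightarrow> nat \<Rightarrow> 'a set set" where
  "tpart xs k = {{xs ! i, xs ! ((i - 1) div 2)} | i. 0 < i \<and> i < k}"

lemma tpart_0: "tpart xs 0 = {}" "tpart xs (Suc 0) = {}"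
  by (auto simp: tpart_def)

lemma tpart_Suc: "0 < k \<Longrightarrow> tpart xs (Suc k) = insert {xs ! k, xs ! ((k - 1) div 2)} (tpart xs k)"
  by (auto simp: tpart_def less_Suc_eq)

lemma tree_lemma:
  assumes Fg: "\<forall>e\<in>F. e \<subseteq> A" and fo: "forest A F" and dist: "distinct xs" and sub: "set xs \<subseteq> A"
    and pw: "\<forall>i j. i < length xs \<longrightarrow> j < length xs \<longrightarrow> i \<noteq> j \<longrightarrow> (xs!i, xs!j) \<notin> (adj A F)\<^sup>*"
  shows "k \<le> length xs \<Longrightarrow> forest A (F \<union> tpart xs k) \<and>
     (\<forall>a b. (a,b) \<in> (adj A (F \<union> tpart xs k))\<^sup>* \<longrightarrow> (a,b) \<in> (adj A F)\<^sup>* \<or>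
         (\<exists>i<k. \<exists>j<k. (a, xs!i) \<in> (adj A F)\<^sup>* \<and> (xs!j, b) \<in> (adj A F)\<^sup>*)) \<and>
     (\<forall>j<k. (xs!0, xs!j) \<in> (adj A (F \<union> tpart xs k))\<^sup>*)"
proof (induction k)
  case 0 then show ?case using fo by (simp add: tpart_0)
next
  case (Suc k)
  then have kl: "k < length xs" by simp
  from Suc have IH: "forest A (F \<union> tpart xs k)"
     "\<And>a b. (a,b) \<in> (adj A (F \<union> tpart xs k))\<^sup>* \<Longrightarrow> (a,b) \<in> (adj A F)\<^sup>* \<or>
         (\<exists>i<k. \<exists>j<k. (a, xs!i) \<in> (adj A F)\<^sup>* \<and> (xs!j, b) \<in> (adj A F)\<^sup>*)"
     "\<And>j. j<k \<Longrightarrow> (xs!0, xs!j) \<in> (adj A (F \<union> tpart xs k))\<^sup>*" by auto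
  show ?case
  proof (cases "k = 0")
    case True
    then show ?thesis using fo by (auto simp: tpart_0)
  next
    case False
    define p where "p = (k - 1) div 2"
    have pk: "p < k" using False unfolding p_def by simp
    have ts: "F \<union> tpart xs (Suc k) = insert {xs!k, xs!p} (F \<union> tpart xs k)"
      using tpart_Suc[of k xs] False unfolding p_def by auto
    have xkA: "xs!k \<in> A" using sub kl nth_mem by blast
    have xpA: "xs!p \<in> A" using sub kl pk nth_mem by (meson order.strict_trans subsetD)
    have nep: "xs!k \<noteq> xs!p" using dist kl pk nth_eq_iff_index_eq by fastforce
    have nc: "(xs!k, xs!p) \<notin> (adj A (F \<union> tpart xs k))\<^sup>*"
    proof
      assume "(xs!k, xs!p) \<in> (adj A (F \<union> tpart xs k))\<^sup>*"
      from IH(2)[OF this] show False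
        using pw kl pk by (metis less_irrefl order.strict_trans)
    qed
    have xsA: "\<And>i. i < length xs \<Longrightarrow> xs!i \<in> A" using sub nth_mem by blast
    have tg: "\<forall>e\<in>F \<union> tpart xs k. e \<subseteq> A"
    proof
      fix e assume "e \<in> F \<union> tpart xs k"
      then consider "e \<in> F" | i where "e = {xs ! i, xs ! ((i - 1) div 2)}" "0 < i" "i < k"
        unfolding tpart_def by blast
      then show "e \<subseteq> A"
      proof cases
        case 1 then show ?thesis using Fg by blast
      next
        case 2
        have "(i - 1) div 2 < length xs" using 2 kl by linarith
        then show ?thesis using 2 kl xsA by auto
      qed
    qed
    have f1: "forest A (F \<union> tpart xs (Suc k))"
      unfolding ts by (rule forest_insert[OF IH(1) tg xkA xpA nep nc])
    have f2: "\<forall>a b. (a,b) \<in> (adj A (F \<union> tpart xs (Suc k)))\<^sup>* \<longrightarrow> (a,b) \<in> (adj A F)\<^sup>* \<or>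
         (\<exists>i<Suc k. \<exists>j<Suc k. (a, xs!i) \<in> (adj A F)\<^sup>* \<and> (xs!j, b) \<in> (adj A F)\<^sup>*)"
    proof (intro allI impI)
      fix a b assume "(a,b) \<in> (adj A (F \<union> tpart xs (Suc k)))\<^sup>*"
      then have u: "(a,b) \<in> (adj A (F \<union> tpart xs k) \<union> {(xs!k, xs!p), (xs!p, xs!k)})\<^sup>*"
        unfolding ts adj_insert[OF xkA xpA nep] .
      consider "(a,b) \<in> (adj A (F \<union> tpart xs k))\<^sup>*"
        | "(a,xs!k) \<in> (adj A (F \<union> tpart xs k))\<^sup>*" "(xs!p,b) \<in> (adj A (F \<union> tpart xs k))\<^sup>*"
        | "(a,xs!p) \<in> (adj A (F \<union> tpart xs k))\<^sup>*" "(xs!k,b) \<in> (adj A (F \<union> tpart xs k))\<^sup>*"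
        using rtrancl_union2[OF u] by blast
      then show "(a,b) \<in> (adj A F)\<^sup>* \<or>
         (\<exists>i<Suc k. \<exists>j<Suc k. (a, xs!i) \<in> (adj A F)\<^sup>* \<and> (xs!j, b) \<in> (adj A F)\<^sup>*)"
      proof cases
        case 1 then show ?thesis using IH(2)[OF 1] less_SucI by blast
      next
        case 2
        have "\<exists>i<Suc k. (a, xs!i) \<in> (adj A F)\<^sup>*"
          using IH(2)[OF 2(1)] lessI less_SucI by blast
        moreover have "\<exists>j<Suc k. (xs!j, b) \<in> (adj A F)\<^sup>*"
          using IH(2)[OF 2(2)] pk less_SucI by blast
        ultimately show ?thesis by blast
      next
        case 3
        have "\<exists>i<Suc k. (a, xs!i) \<in> (adj A F)\<^sup>*"
          using IH(2)[OF 3(1)] pk less_SucI by blast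
        moreover have "\<exists>j<Suc k. (xs!j, b) \<in> (adj A F)\<^sup>*"
          using IH(2)[OF 3(2)] lessI less_SucI by blast
        ultimately show ?thesis by blast
      qed
    qed
    have sm: "(adj A (F \<union> tpart xs k))\<^sup>* \<subseteq> (adj A (F \<union> tpart xs (Suc k)))\<^sup>*"
      by (rule conn_mono) (auto simp: ts)
    have f3: "\<forall>j<Suc k. (xs!0, xs!j) \<in> (adj A (F \<union> tpart xs (Suc k)))\<^sup>*"
    proof (intro allI impI)
      fix j assume "j < Suc k"
      then consider "j < k" | "j = k" by linarith
      then show "(xs!0, xs!j) \<in> (adj A (F \<union> tpart xs (Suc k)))\<^sup>*"
      proof cases
        case 1 then show ?thesis using IH(3) sm by blast
      next
        case 2
        have "(xs!0, xs!p) \<in> (adj A (F \<union> tpart xs (Suc k)))\<^sup>*" using IH(3)[OF pk] sm by blast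
        moreover have "(xs!p, xs!k) \<in> adj A (F \<union> tpart xs (Suc k))"
          unfolding ts adj_insert[OF xkA xpA nep] by simp
        ultimately show ?thesis using 2 by (simp add: rtrancl_into_rtrancl)
      qed
    qed
    show ?thesis by (rule conjI[OF f1 conjI[OF f2 f3]])
  qed
qed

lemma tree_edges_tpart: "tree_edges xs = tpart xs (length xs)"
  by (simp add: tree_edges_def tpart_def)


definition dinv :: "'a set \<Rightarrow> nat \<Rightarrow> 'a dstate \<Rightarrow> bool" where
  "dinv V0 n s \<longleftrightarrow> alive s \<subseteq> V0 \<and>
     (\<forall>e\<in>edges s. \<exists>a b. e = {a,b} \<and> a \<noteq> b \<and> a \<in> alive s \<and> b \<in> alive s) \<and>
     hedges s \<subseteq> edges s \<and> forest (alive s) (hedges s) \<and>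
     (\<forall>x y. (x,y) \<in> (adj (alive s) (hedges s))\<^sup>* \<longrightarrow> ident s x = ident s y) \<and>
     sum (wt s) (alive s) \<le> n"

lemma init_inv:
  assumes "finite V0" "card V0 = n" "connected_graph V0 E0"
  shows "dinv V0 n (dash_init V0 E0 id0)"
proof -
  have g: "\<forall>e\<in>E0. e \<subseteq> V0 \<and> card e = 2" using assms(3) unfolding connected_graph_def graph_def by blast
  have 1: "\<forall>e\<in>E0. \<exists>a b. e = {a,b} \<and> a \<noteq> b \<and> a \<in> V0 \<and> b \<in> V0"
  proof
    fix e assume "e \<in> E0"
    then have "e \<subseteq> V0" "card e = 2" using g by auto
    then show "\<exists>a b. e = {a,b} \<and> a \<noteq> b \<and> a \<in> V0 \<and> b \<in> V0" by (auto simp: card_2_iff)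
  qed
  have 2: "adj V0 {} = {}" by (simp add: adj_def)
  have 3: "forest V0 {}" by (simp add: forest_def)
  show ?thesis using 1 2 3 assms(2) by (simp add: dinv_def dash_init_def)
qed

lemma step_inv:
  assumes fin: "finite V0" and inv: "dinv V0 n s" and st: "dash_step E0 id0 s s2"
  shows "dinv V0 n s2"
proof -
  from st obtain v U xs where v: "v \<in> alive s" and un: "is_UN id0 s v U" and d: "distinct xs"
    and sx: "set xs = U \<union> nbrs (hedges s) v" and al: "alive s2 = alive s - {v}"
    and ed: "edges s2 = {e \<in> edges s. v \<notin> e} \<union> tree_edges xs"
    and he: "hedges s2 = {e \<in> hedges s. v \<notin> e} \<union> tree_edges xs"
    and id: "ident s2 = (\<lambda>x. if xs \<noteq> [] \<and> x \<in> comp (alive s2) (hedges s2) (hd xs)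
                        then Min (ident s ` set xs) else ident s x)"
    and w: "(nbrs (hedges s) v = {} \<and> wt s2 = wt s) \<or>
        (\<exists>r \<in> nbrs (hedges s) v. wt s2 = (wt s)(r := wt s r + wt s v))"
    using st unfolding dash_step_def apply -
    apply (elim exE conjE)
    apply (rule that)
                 apply assumption+
    done
  from inv have Vs: "alive s \<subseteq> V0"
    and Eg: "\<forall>e\<in>edges s. \<exists>a b. e = {a,b} \<and> a \<noteq> b \<and> a \<in> alive s \<and> b \<in> alive s"
    and HE: "hedges s \<subseteq> edges s" and fo: "forest (alive s) (hedges s)"
    and I1: "\<And>x y. (x,y) \<in> (adj (alive s) (hedges s))\<^sup>* \<Longrightarrow> ident s x = ident s y"
    and W: "sum (wt s) (alive s) \<le> n"
    unfolding dinv_def by auto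
  define A where "A = alive s"
  define H where "H = hedges s"
  define A2 where "A2 = A - {v}"
  define H0 where "H0 = {e \<in> H. v \<notin> e}"
  have finA: "finite A" using fin Vs finite_subset unfolding A_def by blast
  have Eg': "\<And>e. e \<in> edges s \<Longrightarrow> e \<subseteq> A" unfolding A_def using Eg by fastforce
  have Hg: "\<forall>e\<in>H. e \<subseteq> A" using Eg' HE unfolding H_def by blast
  have nbE: "nbrs (edges s) v \<subseteq> A2"
  proof
    fix x assume "x \<in> nbrs (edges s) v"
    then have "{v,x} \<in> edges s" "x \<noteq> v" by (auto simp: nbrs_def)
    then show "x \<in> A2" using Eg' unfolding A2_def by blast
  qed
  have nbH: "nbrs H v \<subseteq> nbrs (edges s) v" using HE unfolding H_def by (auto simp: nbrs_def)
  define C where "C = {x \<in> nbrs (edges s) v. ident s x \<noteq> ident s v}"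
  have UC: "U \<subseteq> C" and Uu: "\<forall>c\<in>C. \<exists>!u. u \<in> U \<and> ident s u = ident s c"
    using un unfolding is_UN_def C_def Let_def by auto
  have sxA: "set xs \<subseteq> A2" using sx UC nbE nbH unfolding C_def H_def by blast
  have H0g: "\<forall>e\<in>H0. e \<subseteq> A2" using Hg unfolding H0_def A2_def by blast
  have fo0: "forest A2 H0" using forest_mono[OF fo[folded A_def H_def]] unfolding A2_def H0_def by auto
  have vA: "v \<in> A" using v A_def by simp
  have identN: "\<And>w. w \<in> nbrs H v \<Longrightarrow> ident s w = ident s v"
  proof -
    fix w assume "w \<in> nbrs H v"
    then have "{v,w} \<in> H" "w \<noteq> v" "w \<in> A" using nbH nbE unfolding A2_def by (auto simp: nbrs_def)
    then have "(v,w) \<in> adj A H" using vA by (auto simp: adj_def)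
    then have "(v,w) \<in> (adj A H)\<^sup>*" by (rule r_into_rtrancl)
    then show "ident s w = ident s v" using I1[of v w] unfolding A_def H_def by simp
  qed
  have conn0: "(adj A2 H0)\<^sup>* \<subseteq> (adj A H)\<^sup>*" by (rule conn_mono) (auto simp: A2_def H0_def)
  have conn0': "(adj A2 H0)\<^sup>* \<subseteq> (adj (A - {v}) H)\<^sup>*" by (rule conn_mono) (auto simp: A2_def H0_def)
  have pw: "\<forall>i j. i < length xs \<longrightarrow> j < length xs \<longrightarrow> i \<noteq> j \<longrightarrow> (xs!i, xs!j) \<notin> (adj A2 H0)\<^sup>*"
  proof (intro allI impI notI)
    fix i j assume ij: "i < length xs" "j < length xs" "i \<noteq> j" and c: "(xs!i, xs!j) \<in> (adj A2 H0)\<^sup>*"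
    have ne: "xs!i \<noteq> xs!j" using nth_eq_iff_index_eq[OF d ij(1) ij(2)] ij(3) by simp
    have "xs!i \<in> set xs" "xs!j \<in> set xs" using ij by simp_all
    then have a: "xs!i \<in> U \<union> nbrs H v" "xs!j \<in> U \<union> nbrs H v" using sx unfolding H_def by simp_all
    have cH: "(xs!i, xs!j) \<in> (adj A H)\<^sup>*" using conn0 c by (rule subsetD)
    then have ideq: "ident s (xs!i) = ident s (xs!j)" using I1 unfolding A_def H_def by simp
    show False
    proof (cases "xs!i \<in> U")
      case True
      then have ci: "xs!i \<in> C" using UC by (rule subsetD[rotated])
      then have niv: "ident s (xs!i) \<noteq> ident s v" unfolding C_def by simp
      have "xs!j \<notin> nbrs H v"
      proof
        assume "xs!j \<in> nbrs H v"
        then have "ident s (xs!j) = ident s v" by (rule identN)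
        then show False using niv ideq by simp
      qed
      then have jU: "xs!j \<in> U" using a by simp
      have u1: "\<exists>!u. u \<in> U \<and> ident s u = ident s (xs!i)" using Uu ci by simp
      obtain u0 where u0: "\<forall>y. y \<in> U \<and> ident s y = ident s (xs!i) \<longrightarrow> y = u0"
        using ex1E[OF u1] by metis
      have "xs!i = u0" using u0 True by simp
      moreover have "xs!j = u0" using u0 jU ideq by simp
      ultimately show False using ne by simp
    next
      case False
      then have iN: "xs!i \<in> nbrs H v" using a by simp
      show False
      proof (cases "xs!j \<in> U")
        case True
        then have "xs!j \<in> C" using UC by (rule subsetD[rotated])
        then have "ident s (xs!j) \<noteq> ident s v" unfolding C_def by simp
        then show False using identN[OF iN] ideq by simp
      next
        case False
        then have jN: "xs!j \<in> nbrs H v" using a by simp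
        have "(xs!i,xs!j) \<in> (adj (A - {v}) H)\<^sup>*" using conn0' c by (rule subsetD)
        then show False using forest_nbrs[OF fo[folded A_def H_def] Hg iN jN ne] by simp
      qed
    qed
  qed
  have TR: "forest A2 (H0 \<union> tpart xs (length xs)) \<and>
     (\<forall>a b. (a,b) \<in> (adj A2 (H0 \<union> tpart xs (length xs)))\<^sup>* \<longrightarrow> (a,b) \<in> (adj A2 H0)\<^sup>* \<or>
         (\<exists>i<length xs. \<exists>j<length xs. (a, xs!i) \<in> (adj A2 H0)\<^sup>* \<and> (xs!j, b) \<in> (adj A2 H0)\<^sup>*)) \<and>
     (\<forall>j<length xs. (xs!0, xs!j) \<in> (adj A2 (H0 \<union> tpart xs (length xs)))\<^sup>*)"
    by (rule tree_lemma[OF H0g fo0 d sxA pw]) simp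
  have H2: "hedges s2 = H0 \<union> tpart xs (length xs)" using he unfolding H0_def H_def tree_edges_tpart .
  have A2e: "alive s2 = A2" using al unfolding A2_def A_def .
  have TRb: "\<And>a b. (a,b) \<in> (adj A2 (hedges s2))\<^sup>* \<Longrightarrow> (a,b) \<in> (adj A2 H0)\<^sup>* \<or>
         (\<exists>i<length xs. \<exists>j<length xs. (a, xs!i) \<in> (adj A2 H0)\<^sup>* \<and> (xs!j, b) \<in> (adj A2 H0)\<^sup>*)"
    using TR H2 by simp
  have TRc: "\<And>j. j<length xs \<Longrightarrow> (xs!0, xs!j) \<in> (adj A2 (hedges s2))\<^sup>*" using TR H2 by simp
  have c02: "(adj A2 H0)\<^sup>* \<subseteq> (adj A2 (hedges s2))\<^sup>*" by (rule conn_mono) (auto simp: H2)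
  have xsA: "\<And>i. i < length xs \<Longrightarrow> xs!i \<in> A2" using sxA nth_mem by blast
  have p1: "alive s2 \<subseteq> V0" using al Vs by blast
  have p2: "\<forall>e\<in>edges s2. \<exists>a b. e = {a,b} \<and> a \<noteq> b \<and> a \<in> alive s2 \<and> b \<in> alive s2"
  proof
    fix e assume "e \<in> edges s2"
    then consider "e \<in> edges s" "v \<notin> e" | i where "e = {xs ! i, xs ! ((i - 1) div 2)}" "0 < i" "i < length xs"
      unfolding ed tree_edges_def by blast
    then show "\<exists>a b. e = {a,b} \<and> a \<noteq> b \<and> a \<in> alive s2 \<and> b \<in> alive s2"
    proof cases
      case 1
      then obtain a b where ab: "e = {a,b}" "a \<noteq> b" "a \<in> alive s" "b \<in> alive s" using Eg by meson
      then have "a \<in> alive s2" "b \<in> alive s2" using 1 al by auto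
      then show ?thesis using ab by blast
    next
      case 2
      have l: "(i - 1) div 2 < length xs" "(i - 1) div 2 \<noteq> i" using 2 by linarith+
      then have "xs ! i \<noteq> xs ! ((i - 1) div 2)" using nth_eq_iff_index_eq[OF d 2(3) l(1)] by simp
      moreover have "xs ! i \<in> alive s2" "xs ! ((i - 1) div 2) \<in> alive s2" using xsA 2(3) l(1) A2e by simp_all
      ultimately show ?thesis using 2(1) by blast
    qed
  qed
  have p3: "hedges s2 \<subseteq> edges s2" unfolding he ed using HE by auto
  have p4: "forest (alive s2) (hedges s2)" using TR H2 A2e by simp
  have p5: "\<forall>x y. (x,y) \<in> (adj (alive s2) (hedges s2))\<^sup>* \<longrightarrow> ident s2 x = ident s2 y"
  proof (intro allI impI)
    fix x y assume c: "(x,y) \<in> (adj (alive s2) (hedges s2))\<^sup>*"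
    then have c2: "(x,y) \<in> (adj A2 (hedges s2))\<^sup>*" using A2e by simp
    show "ident s2 x = ident s2 y"
    proof (cases "xs = []")
      case True
      then have "hedges s2 = H0" using H2 by (simp add: tpart_def)
      then have "(x,y) \<in> (adj A H)\<^sup>*" using conn0 c2 by (simp add: subsetD)
      then show ?thesis using I1 True id unfolding A_def H_def by simp
    next
      case False
      define K where "K = comp (alive s2) (hedges s2) (hd xs)"
      have hd0: "hd xs = xs!0" using False by (simp add: hd_conv_nth)
      have K: "K = {z \<in> A2. (xs!0, z) \<in> (adj A2 (hedges s2))\<^sup>*}"
        unfolding K_def comp_def A2e hd0 ..
      have KK: "x \<in> K \<longleftrightarrow> y \<in> K"
      proof
        assume "x \<in> K"
        then have "x \<in> A2" "(xs!0, x) \<in> (adj A2 (hedges s2))\<^sup>*" using K by auto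
        moreover have "y \<in> A2" using \<open>x \<in> A2\<close> conn_in[OF c2] by (cases "x = y") simp_all
        moreover have "(xs!0, y) \<in> (adj A2 (hedges s2))\<^sup>*" using rtrancl_trans[OF calculation(2) c2] .
        ultimately show "y \<in> K" using K by simp
      next
        assume "y \<in> K"
        then have "y \<in> A2" "(xs!0, y) \<in> (adj A2 (hedges s2))\<^sup>*" using K by auto
        moreover have "(y,x) \<in> (adj A2 (hedges s2))\<^sup>*" using conn_sym[OF c2] .
        moreover have "x \<in> A2" using \<open>y \<in> A2\<close> conn_in[OF c2] by (cases "x = y") simp_all
        moreover have "(xs!0, x) \<in> (adj A2 (hedges s2))\<^sup>*" using rtrancl_trans[OF calculation(2) calculation(3)] .
        ultimately show "x \<in> K" using K by simp
      qed
      show ?thesis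
      proof (cases "x \<in> K")
        case True
        then show ?thesis using KK id False unfolding K_def by simp
      next
        case xK: False
        then have yK: "y \<notin> K" using KK by simp
        from TRb[OF c2] show ?thesis
        proof
          assume "(x,y) \<in> (adj A2 H0)\<^sup>*"
          then have "(x,y) \<in> (adj A H)\<^sup>*" using conn0 by (simp add: subsetD)
          then have "ident s x = ident s y" using I1 unfolding A_def H_def by simp
          then show ?thesis using id xK yK unfolding K_def by simp
        next
          assume "\<exists>i<length xs. \<exists>j<length xs. (x, xs!i) \<in> (adj A2 H0)\<^sup>* \<and> (xs!j, y) \<in> (adj A2 H0)\<^sup>*"
          then obtain i where i: "i < length xs" "(x, xs!i) \<in> (adj A2 H0)\<^sup>*" by blast
          have "(x, xs!i) \<in> (adj A2 (hedges s2))\<^sup>*" using c02 i(2) by (simp add: subsetD)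
          then have "(xs!i, x) \<in> (adj A2 (hedges s2))\<^sup>*" by (rule conn_sym)
          then have "(xs!0, x) \<in> (adj A2 (hedges s2))\<^sup>*" using rtrancl_trans[OF TRc[OF i(1)]] by simp
          moreover have "x \<in> A2" using xsA[OF i(1)] conn_in[OF i(2)] by (cases "x = xs!i") simp_all
          ultimately have "x \<in> K" using K by simp
          then show ?thesis using xK by simp
        qed
      qed
    qed
  qed
  have p6: "sum (wt s2) (alive s2) \<le> n"
  proof -
    have sA: "sum (wt s) A = wt s v + sum (wt s) A2"
      unfolding A2_def using sum.remove[OF finA vA] .
    from w show ?thesis
    proof
      assume "nbrs (hedges s) v = {} \<and> wt s2 = wt s"
      then show ?thesis using sA W A2e unfolding A_def by simp
    next
      assume "\<exists>r \<in> nbrs (hedges s) v. wt s2 = (wt s)(r := wt s r + wt s v)"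
      then obtain r where r: "r \<in> nbrs H v" "wt s2 = (wt s)(r := wt s r + wt s v)" unfolding H_def by blast
      have rA: "r \<in> A2" using r nbH nbE by blast
      have finA2: "finite A2" using finA unfolding A2_def by simp
      have "sum (wt s2) A2 = wt s2 r + sum (wt s2) (A2 - {r})" using sum.remove[OF finA2 rA] .
      also have "sum (wt s2) (A2 - {r}) = sum (wt s) (A2 - {r})" using r(2) by (intro sum.cong) auto
      also have "wt s2 r = wt s r + wt s v" using r(2) by simp
      also have "wt s r + wt s v + sum (wt s) (A2 - {r}) = wt s v + sum (wt s) A2"
        using sum.remove[OF finA2 rA, of "wt s"] by simp
      finally show ?thesis using sA W A2e unfolding A_def by simp
    qed
  qed
  show ?thesis unfolding dinv_def using p1 p2 p3 p4 p5 p6 by blast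
qed


lemma reach_inv:
  assumes "finite V0" "card V0 = n" "connected_graph V0 E0" "dash_reachable V0 E0 id0 s"
  shows "dinv V0 n s"
  using assms(4) unfolding dash_reachable_def
proof (induction rule: rtranclp_induct)
  case base then show ?case using init_inv[OF assms(1-3)] .
next
  case (step y z) then show ?case using step_inv[OF assms(1)] by blast
qed

theorem lemma5:
  fixes V0 :: "'a set" and E0 :: "'a set set" and id0 :: "'a \<Rightarrow> real"
    and n :: nat and s :: "'a dstate" and v :: 'a
  assumes "finite V0" and "card V0 = n"
    and "connected_graph V0 E0"
    and "\<forall>x \<in> V0. 0 \<le> id0 x \<and> id0 x \<le> 1"
    and "dash_reachable V0 E0 id0 s"
    and "v \<in> alive s"
  shows "rem s v \<le> n"
proof -
  have inv: "dinv V0 n s" using reach_inv[OF assms(1,2,3,5)] .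
  then have Vs: "alive s \<subseteq> V0"
    and Eg: "\<forall>e\<in>edges s. \<exists>a b. e = {a,b} \<and> a \<noteq> b \<and> a \<in> alive s \<and> b \<in> alive s"
    and HE: "hedges s \<subseteq> edges s" and fo: "forest (alive s) (hedges s)"
    and W: "sum (wt s) (alive s) \<le> n"
    unfolding dinv_def by auto
  define A where "A = alive s"
  define H where "H = hedges s"
  define N where "N = nbrs H v"
  define K where "K = (\<lambda>u. comp (A - {v}) H u)"
  have finA: "finite A" using assms(1) Vs finite_subset unfolding A_def by blast
  have vA: "v \<in> A" using assms(6) A_def by simp
  have Hg: "\<forall>e\<in>H. e \<subseteq> A"
  proof
    fix e assume "e \<in> H"
    then have "e \<in> edges s" using HE H_def by auto
    then obtain a b where "e = {a,b}" "a \<in> A" "b \<in> A" using Eg A_def by meson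
    then show "e \<subseteq> A" by simp
  qed
  have NA: "N \<subseteq> A"
  proof
    fix x assume "x \<in> N"
    then have "{v,x} \<in> H" by (simp add: N_def nbrs_def)
    then show "x \<in> A" using Hg by blast
  qed
  have finN: "finite N" using finite_subset[OF NA finA] .
  have KA: "\<And>u. K u \<subseteq> A - {v}" unfolding K_def comp_def by auto
  have finK: "\<forall>u\<in>N. finite (K u)" using KA finA by (meson finite_Diff finite_subset)
  have disj: "\<forall>u1\<in>N. \<forall>u2\<in>N. u1 \<noteq> u2 \<longrightarrow> K u1 \<inter> K u2 = {}"
  proof (intro ballI impI)
    fix u1 u2 assume u: "u1 \<in> N" "u2 \<in> N" "u1 \<noteq> u2"
    show "K u1 \<inter> K u2 = {}"
    proof (rule ccontr)
      assume "K u1 \<inter> K u2 \<noteq> {}"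
      then obtain z where "z \<in> K u1" "z \<in> K u2" by blast
      then have z1: "(u1,z) \<in> (adj (A - {v}) H)\<^sup>*" and z2: "(u2,z) \<in> (adj (A - {v}) H)\<^sup>*"
        unfolding K_def comp_def by auto
      have "(u1,u2) \<in> (adj (A - {v}) H)\<^sup>*" using rtrancl_trans[OF z1 conn_sym[OF z2]] .
      then show False using forest_nbrs[OF fo[folded A_def H_def] Hg u[unfolded N_def]] by simp
    qed
  qed
  have "(\<Sum>u\<in>N. WT s u v) = (\<Sum>u\<in>N. sum (wt s) (K u))"
    unfolding WT_def K_def A_def H_def by simp
  also have "\<dots> = sum (wt s) (\<Union>(K ` N))"
    using sum.UNION_disjoint[OF finN finK disj, of "wt s"] by (rule sym)
  also have "\<dots> \<le> sum (wt s) (A - {v})"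
    by (rule sum_mono2) (use finA KA in auto)
  finally have S: "(\<Sum>u\<in>N. WT s u v) \<le> sum (wt s) (A - {v})" .
  have sA: "sum (wt s) A = wt s v + sum (wt s) (A - {v})" using sum.remove[OF finA vA] .
  have "rem s v \<le> (\<Sum>u\<in>N. WT s u v) + wt s v"
    unfolding rem_def N_def H_def by simp
  also have "\<dots> \<le> sum (wt s) A" using S sA by simp
  also have "\<dots> \<le> n" using W A_def by simp
  finally show ?thesis .
qed

end
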